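(* Let $p,q$ be integers with $2\le q<p$, and let $\tau:\Sigma_q^\ast\to\{-1,0,\ldots,p-2\}$ be a regular mapping. Let \[ \Gamma(\tau)=\{I=i_1i_2\cdots i_{|I|}\in\Sigma_q^\ast: i_{|I|}\ne0\}\cup\{0\} \] (where $0$ denotes the word of length one consisting of the digit $0$). Then the map $\tau^\ast:\Gamma(\tau)\to\Lambda(\tau)$ is a bijection. Furthermore, if $I,J\in\Gamma(\tau)$ are distinct and $I_{1,k}=J_{1,k}$ for some integer $k\ge0$ (the condition being vacuous for $k=0$), then $|\tau^\ast(I)-\tau^\ast(J)|\ge p^k$.
   Context: Let $\Sigma_q=\{0,1,\ldots,q-1\}$, $\Sigma_q^n$ the words of length $n$, and $\Sigma_q^\ast=\bigcup_{n\ge1}\Sigma_q^n$; $|I|$ is the length of $I$. A map $\tau:\Sigma_q^\ast\to\{-1,0,\ldots,p-2\}$ is a regular mapping if (i) $\tau(0^n)=0$ for all $n\ge1$; (ii) $\tau(i_1\cdots i_n)\in i_n+q\mathbb Z$ for every word $i_1\cdots i_n$; (iii) for every $I\in\Sigma_q^\ast$, $\tau(I0^l)=0$ for all sufficiently large $l$. For $I=i_1\cdots i_n\in\Sigma_q^\ast$ and $k\ge1$, let $I_{1,k}=i_1\cdots i_k$ if $k\le n$ and $I_{1,k}=i_1\cdots i_n0^{k-n}$ if $k>n$. Set $\tau^\ast(I)=\sum_{k=1}^\infty \tau(I_{1,k})p^{k-1}$ (a finite sum by (iii)), and $\Lambda(\tau)=\{\tau^\ast(I): I\in\Sigma_q^\ast\}$.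 *)

theory Defs
  imports Main
begin

definition words :: "nat \<Rightarrow> nat list set" where
  "words q = {I. I \<noteq> [] \<and> (\<forall>i\<in>set I. i < q)}"

definition regular_mapping :: "nat \<Rightarrow> nat \<Rightarrow> (nat list \<Rightarrow> int) \<Rightarrow> bool" where
  "regular_mapping p q \<tau> \<longleftrightarrow>
     (\<forall>I\<in>words q. \<tau> I \<in> {-1 .. int p - 2}) \<and>
     (\<forall>n\<ge>1. \<tau> (replicate n 0) = 0) \<and>
     (\<forall>I\<in>words q. \<tau> I mod int q = int (last I) mod int q) \<and>
     (\<forall>I\<in>words q. \<exists>L. \<forall>l\<ge>L. \<tau> (I @ replicate l 0) = 0)"

definition pref :: "nat list \<Rightarrow> nat \<Rightarrow> nat list" where
  "pref I k = take k I @ replicate (k - length I) 0"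

text \<open>tau^*(I) = sum_{k>=1} tau(I_{1,k}) p^(k-1), a finite sum (over the finitely many nonzero terms).\<close>
definition tau_star :: "nat \<Rightarrow> (nat list \<Rightarrow> int) \<Rightarrow> nat list \<Rightarrow> int" where
  "tau_star p \<tau> I = (\<Sum>k\<in>{k. k \<ge> 1 \<and> \<tau> (pref I k) \<noteq> 0}. \<tau> (pref I k) * int p ^ (k - 1))"

definition Lambda :: "nat \<Rightarrow> nat \<Rightarrow> (nat list \<Rightarrow> int) \<Rightarrow> int set" where
  "Lambda p q \<tau> = tau_star p \<tau> ` words q"

definition Gamma :: "nat \<Rightarrow> nat list set" where
  "Gamma q = {I\<in>words q. last I \<noteq> 0} \<union> {[0]}"

end

theory Submission
  imports Defs
begin

definition dig :: "nat list \<Rightarrow> nat \<Rightarrow> nat" where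
  "dig I j = (if j < length I then I ! j else 0)"

lemma pref_dig: "pref I k = map (dig I) [0..<k]"
  by (rule nth_equalityI) (auto simp: pref_def dig_def nth_append min_def)

lemma last_pref: "last (pref I (Suc j)) = dig I j"
  by (simp add: pref_dig)

lemma dig_lt: "I \<in> words q \<Longrightarrow> 2 \<le> q \<Longrightarrow> dig I j < q"
  by (auto simp: dig_def words_def)

lemma pref_words: "I \<in> words q \<Longrightarrow> 2 \<le> q \<Longrightarrow> pref I (Suc j) \<in> words q"
  using dig_lt[of I q] by (auto simp: words_def pref_dig)

lemma ts_eq:
  assumes "\<forall>k\<ge>Suc N. \<tau> (pref I k) = 0"
  shows "tau_star p \<tau> I = (\<Sum>j<N. \<tau> (pref I (Suc j)) * int p ^ j)"
proof -
  have "tau_star p \<tau> I = (\<Sum>k\<in>{Suc 0..N}. \<tau> (pref I k) * int p ^ (k - 1))"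
    unfolding tau_star_def
  proof (rule sum.mono_neutral_left)
    show "{k. 1 \<le> k \<and> \<tau> (pref I k) \<noteq> 0} \<subseteq> {Suc 0..N}"
      using assms by (auto, meson not_less_eq_eq)
  qed auto
  also have "\<dots> = (\<Sum>j<N. \<tau> (pref I (Suc j)) * int p ^ j)"
    by (simp add: sum.atLeast1_atMost_eq)
  finally show ?thesis .
qed

lemma ev_zero:
  assumes "regular_mapping p q \<tau>" "I \<in> words q"
  shows "\<exists>N. \<forall>k\<ge>Suc N. \<tau> (pref I k) = 0"
proof -
  obtain L where L: "\<forall>l\<ge>L. \<tau> (I @ replicate l 0) = 0"
    using assms unfolding regular_mapping_def by blast
  have "\<forall>k\<ge>Suc (length I + L). \<tau> (pref I k) = 0"
    using L by (auto simp: pref_def)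
  then show ?thesis by blast
qed

lemma key:
  fixes c :: "nat \<Rightarrow> int" and p :: int
  assumes "p > 1" "\<forall>j<m. c j = 0" "c m \<noteq> 0" "\<bar>c m\<bar> < p" "m < N"
  shows "p ^ m \<le> \<bar>\<Sum>j<N. c j * p ^ j\<bar>"
proof -
  let ?S = "\<Sum>j<N. c j * p ^ j"
  have d1: "p ^ m dvd ?S"
  proof (rule dvd_sum)
    fix j assume "j \<in> {..<N}"
    show "p ^ m dvd c j * p ^ j"
    proof (cases "j < m")
      case True then show ?thesis using assms(2) by simp
    next
      case False then show ?thesis by (simp add: le_imp_power_dvd)
    qed
  qed
  have split: "?S = c m * p ^ m + (\<Sum>j\<in>{..<N} - {m}. c j * p ^ j)"
    using assms(5) by (simp add: sum.remove)
  have d2: "p ^ Suc m dvd (\<Sum>j\<in>{..<N} - {m}. c j * p ^ j)"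
  proof (rule dvd_sum)
    fix j assume j: "j \<in> {..<N} - {m}"
    show "p ^ Suc m dvd c j * p ^ j"
    proof (cases "j < m")
      case True then show ?thesis using assms(2) by simp
    next
      case False then have "Suc m \<le> j" using j by auto
      then have "p ^ Suc m dvd p ^ j" by (rule le_imp_power_dvd)
      then show ?thesis by (rule dvd_mult)
    qed
  qed
  have "?S \<noteq> 0"
  proof
    assume "?S = 0"
    then have "p ^ Suc m dvd c m * p ^ m"
      using split d2 by (metis add.commute add_diff_cancel dvd_minus_iff diff_0 )
    then have "p dvd c m" using assms(1) by (simp add: mult.commute)
    then have "\<bar>p\<bar> \<le> \<bar>c m\<bar>" using assms(3) by (rule_tac dvd_imp_le_int) auto
    then show False using assms by simp
  qed
  then have "\<bar>p ^ m\<bar> \<le> \<bar>?S\<bar>" using d1 by (rule dvd_imp_le_int)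
  then show ?thesis using assms(1) by simp
qed

lemma dig_distinct:
  assumes "I \<in> Gamma q" "J \<in> Gamma q" "I \<noteq> J"
  shows "\<exists>j. dig I j \<noteq> dig J j"
proof (rule ccontr)
  assume "\<not> ?thesis"
  then have eq: "\<And>j. dig I j = dig J j" by blast
  have ne: "I \<noteq> []" "J \<noteq> []" using assms by (auto simp: Gamma_def words_def)
  have gen: "A = [0]" if "length B < length A" "\<forall>j. dig A j = dig B j" "A \<in> Gamma q" for A B
  proof -
    have "length A - 1 < length A" "\<not> length A - 1 < length B" using that(1) by auto
    then have "A ! (length A - 1) = 0" using that(1) spec[OF that(2), of "length A - 1"]
      by (auto simp: dig_def)
    then have "last A = 0" using that(1) last_conv_nth[of A] by fastforce
    then show ?thesis using that(3) by (auto simp: Gamma_def)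
  qed
  consider "length I = length J" | "length I < length J" | "length J < length I" by linarith
  then show False
  proof cases
    case 1
    have "I = J"
    proof (rule nth_equalityI)
      fix i assume "i < length I" then show "I ! i = J ! i" using eq[of i] 1 by (simp add: dig_def)
    qed (rule 1)
    then show False using assms by simp
  next
    case 2
    then have "J = [0]" using gen[of I J] eq assms(2) by simp
    then show False using 2 ne by simp
  next
    case 3
    then have "I = [0]" using gen[of J I] eq assms(1) by simp
    then show False using 3 ne by simp
  qed
qed

lemma pref_eq_dig: "pref I k = pref J k \<Longrightarrow> j < k \<Longrightarrow> dig I j = dig J j"
proof -
  assume a: "pref I k = pref J k" "j < k"
  have "pref I k ! j = pref J k ! j" using a(1) by simp
  then have "map (dig I) [0..<k] ! j = map (dig J) [0..<k] ! j" by (simp only: pref_dig)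
  then show ?thesis using a(2) by (simp only: nth_map_upt diff_zero add_0)
qed

lemma dig_eq_pref: "(\<And>j. j < k \<Longrightarrow> dig I j = dig J j) \<Longrightarrow> pref I k = pref J k"
  by (simp add: pref_dig)

lemma dist:
  assumes q: "2 \<le> q" "q < p" and reg: "regular_mapping p q \<tau>"
    and IJ: "I \<in> Gamma q" "J \<in> Gamma q" "I \<noteq> J" and pk: "pref I k = pref J k"
  shows "int p ^ k \<le> \<bar>tau_star p \<tau> I - tau_star p \<tau> J\<bar>"
proof -
  have W: "I \<in> words q" "J \<in> words q" using IJ q(1) by (auto simp: Gamma_def words_def)
  define m where "m = (LEAST j. dig I j \<noteq> dig J j)"
  have dm: "dig I m \<noteq> dig J m" unfolding m_def using dig_distinct[OF IJ] by (rule LeastI_ex)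
  have before: "\<And>j. j < m \<Longrightarrow> dig I j = dig J j" unfolding m_def using not_less_Least by blast
  have km: "k \<le> m" using pref_eq_dig[OF pk] dm by (meson not_le)
  obtain NI where NI: "\<forall>k\<ge>Suc NI. \<tau> (pref I k) = 0" using ev_zero[OF reg W(1)] by blast
  obtain NJ where NJ: "\<forall>k\<ge>Suc NJ. \<tau> (pref J k) = 0" using ev_zero[OF reg W(2)] by blast
  define N where "N = max NI (max NJ (Suc m))"
  have "\<forall>k\<ge>Suc N. \<tau> (pref I k) = 0" using NI by (auto simp: N_def)
  then have tI: "tau_star p \<tau> I = (\<Sum>j<N. \<tau> (pref I (Suc j)) * int p ^ j)" by (rule ts_eq)
  have "\<forall>k\<ge>Suc N. \<tau> (pref J k) = 0" using NJ by (auto simp: N_def)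
  then have tJ: "tau_star p \<tau> J = (\<Sum>j<N. \<tau> (pref J (Suc j)) * int p ^ j)" by (rule ts_eq)
  define c where "c j = \<tau> (pref I (Suc j)) - \<tau> (pref J (Suc j))" for j
  have diff: "tau_star p \<tau> I - tau_star p \<tau> J = (\<Sum>j<N. c j * int p ^ j)"
    unfolding tI tJ c_def by (simp add: sum_subtractf left_diff_distrib)
  have c0: "\<forall>j<m. c j = 0"
  proof (intro allI impI)
    fix j assume "j < m"
    then have "pref I (Suc j) = pref J (Suc j)" by (intro dig_eq_pref) (auto intro: before)
    then show "c j = 0" by (simp add: c_def)
  qed
  have PI: "pref I (Suc m) \<in> words q" "pref J (Suc m) \<in> words q"
    using pref_words[OF W(1) q(1)] pref_words[OF W(2) q(1)] by auto
  have modI: "\<tau> (pref I (Suc m)) mod int q = int (dig I m) mod int q"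
    using reg PI(1) last_pref[of I m] unfolding regular_mapping_def by auto
  have modJ: "\<tau> (pref J (Suc m)) mod int q = int (dig J m) mod int q"
    using reg PI(2) last_pref[of J m] unfolding regular_mapping_def by auto
  have "int (dig I m) mod int q \<noteq> int (dig J m) mod int q"
    using dig_lt[OF W(1) q(1), of m] dig_lt[OF W(2) q(1), of m] dm by simp
  then have cm: "c m \<noteq> 0" using modI modJ by (auto simp: c_def)
  have rI: "\<tau> (pref I (Suc m)) \<in> {-1 .. int p - 2}" using reg PI(1) unfolding regular_mapping_def by blast
  have rJ: "\<tau> (pref J (Suc m)) \<in> {-1 .. int p - 2}" using reg PI(2) unfolding regular_mapping_def by blast
  have cb: "\<bar>c m\<bar> < int p" using rI rJ by (auto simp: c_def)
  have "int p ^ m \<le> \<bar>\<Sum>j<N. c j * int p ^ j\<bar>"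
    by (rule key) (use q c0 cm cb in \<open>auto simp: N_def\<close>)
  moreover have "int p ^ k \<le> int p ^ m" using km q by (intro power_increasing) auto
  ultimately show ?thesis using diff by simp
qed

lemma strip:
  assumes "2 \<le> q"
  shows "I \<in> words q \<Longrightarrow> \<exists>I'\<in>Gamma q. \<forall>k. pref I k = pref I' k"
proof (induction I rule: rev_induct)
  case Nil then show ?case by (simp add: words_def)
next
  case (snoc x xs)
  show ?case
  proof (cases "x = 0")
    case False
    then have "xs @ [x] \<in> Gamma q" using snoc.prems by (simp add: Gamma_def)
    then show ?thesis by blast
  next
    case True
    show ?thesis
    proof (cases "xs = []")
      case True
      then have "xs @ [x] \<in> Gamma q" using \<open>x = 0\<close> by (simp add: Gamma_def)
      then show ?thesis by blast
    next
      case False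
      then have "xs \<in> words q" using snoc.prems by (simp add: words_def)
      then obtain I' where I': "I' \<in> Gamma q" "\<forall>k. pref xs k = pref I' k" using snoc.IH by blast
      have "\<And>k. pref (xs @ [x]) k = pref xs k"
        by (rule dig_eq_pref) (auto simp: dig_def nth_append True)
      then show ?thesis using I' by metis
    qed
  qed
qed

theorem lemma2p2:
  fixes p q :: nat and \<tau> :: "nat list \<Rightarrow> int"
  assumes "2 \<le> q" and "q < p" and "regular_mapping p q \<tau>"
  shows "bij_betw (tau_star p \<tau>) (Gamma q) (Lambda p q \<tau>) \<and>
    (\<forall>I\<in>Gamma q. \<forall>J\<in>Gamma q. \<forall>k::nat. I \<noteq> J \<and> pref I k = pref J k \<longrightarrow>
        \<bar>tau_star p \<tau> I - tau_star p \<tau> J\<bar> \<ge> int p ^ k)"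
proof
  show D: "\<forall>I\<in>Gamma q. \<forall>J\<in>Gamma q. \<forall>k::nat. I \<noteq> J \<and> pref I k = pref J k \<longrightarrow>
        \<bar>tau_star p \<tau> I - tau_star p \<tau> J\<bar> \<ge> int p ^ k"
    using dist[OF assms] by blast
  show "bij_betw (tau_star p \<tau>) (Gamma q) (Lambda p q \<tau>)"
    unfolding bij_betw_def
  proof
    show "inj_on (tau_star p \<tau>) (Gamma q)"
    proof (rule inj_onI, rule ccontr)
      fix I J assume "I \<in> Gamma q" "J \<in> Gamma q" "tau_star p \<tau> I = tau_star p \<tau> J" "I \<noteq> J"
      then show False using D[rule_format, of I J 0] by (simp add: pref_def)
    qed
    have G: "Gamma q \<subseteq> words q" using assms(1) by (auto simp: Gamma_def words_def)
    show "tau_star p \<tau> ` Gamma q = Lambda p q \<tau>"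
      unfolding Lambda_def
    proof
      show "tau_star p \<tau> ` Gamma q \<subseteq> tau_star p \<tau> ` words q" using G by auto
      show "tau_star p \<tau> ` words q \<subseteq> tau_star p \<tau> ` Gamma q"
      proof
        fix y assume "y \<in> tau_star p \<tau> ` words q"
        then obtain I where I: "I \<in> words q" "y = tau_star p \<tau> I" by blast
        obtain I' where I': "I' \<in> Gamma q" "\<forall>k. pref I k = pref I' k" using strip[OF assms(1) I(1)] by blast
        have "tau_star p \<tau> I = tau_star p \<tau> I'" unfolding tau_star_def using I'(2) by simp
        then show "y \<in> tau_star p \<tau> ` Gamma q" using I I' by blast
      qed
    qed
  qed
qed

end
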